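(* Let $a,b,k\in\mathbb{N}$ with $k\le\min(a,b)$. Then $(\mathcal{A}_k([a]\times[b]),\le_k)\cong\mathcal{D}_k([a]\times[b])$ as posets.
   Context: $[n]=\{1,\dots,n\}$, and $[a]\times[b]$ and $\mathbb{Z}_+^2$ carry the product order. For a finite poset $P$, $\mathcal{A}_k(P)$ is the set of antichains of $P$ of size $k$; for $A,B\in\mathcal{A}_k(P)$, $A\prec_k B$ means $A\setminus B=\{a\}$, $B\setminus A=\{b\}$ are singletons with $a<_P b$, and $\le_k$ is the reflexive transitive closure of $\prec_k$. A Ferrers diagram is a finite order ideal of $\mathbb{Z}_+^2$; its Durfee length is the largest $k$ with $[k]\times[k]\subseteq D$. $\mathcal{D}_k([a]\times[b])$ is the set of Ferrers diagrams of Durfee length exactly $k$ contained in $[a]\times[b]$, ordered by inclusion. *)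

theory Defs
  imports Main
begin

definition antichains :: "'a set \<Rightarrow> ('a \<Rightarrow> 'a \<Rightarrow> bool) \<Rightarrow> nat \<Rightarrow> 'a set set" where
  "antichains P le k = {A. A \<subseteq> P \<and> card A = k \<and>
      (\<forall>x\<in>A. \<forall>y\<in>A. x \<noteq> y \<longrightarrow> \<not> le x y)}"

definition antichain_step :: "'a set \<Rightarrow> ('a \<Rightarrow> 'a \<Rightarrow> bool) \<Rightarrow> nat \<Rightarrow> 'a set \<Rightarrow> 'a set \<Rightarrow> bool" where
  "antichain_step P le k A B \<longleftrightarrow> A \<in> antichains P le k \<and> B \<in> antichains P le k \<and>
      (\<exists>x y. A - B = {x} \<and> B - A = {y} \<and> le x y \<and> x \<noteq> y)"

definition antichain_le :: "'a set \<Rightarrow> ('a \<Rightarrow> 'a \<Rightarrow> bool) \<Rightarrow> nat \<Rightarrow> 'a set \<Rightarrow> 'a set \<Rightarrow> bool" where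
  "antichain_le P le k = (antichain_step P le k)\<^sup>*\<^sup>*"

definition prod_le :: "nat \<times> nat \<Rightarrow> nat \<times> nat \<Rightarrow> bool" where
  "prod_le p q \<longleftrightarrow> fst p \<le> fst q \<and> snd p \<le> snd q"

definition grid :: "nat \<Rightarrow> nat \<Rightarrow> (nat \<times> nat) set" where
  "grid a b = {1..a} \<times> {1..b}"

text \<open>\<Z>_+^2 is modelled as pairs of positive naturals.\<close>
definition posquad :: "(nat \<times> nat) set" where
  "posquad = {p. fst p \<ge> 1 \<and> snd p \<ge> 1}"

definition ferrers :: "(nat \<times> nat) set \<Rightarrow> bool" where
  "ferrers D \<longleftrightarrow> finite D \<and> D \<subseteq> posquad \<and>
     (\<forall>x\<in>D. \<forall>y\<in>posquad. prod_le y x \<longrightarrow> y \<in> D)"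

definition durfee :: "(nat \<times> nat) set \<Rightarrow> nat" where
  "durfee D = (GREATEST k. {1..k} \<times> {1..k} \<subseteq> D)"

definition ferrers_durfee :: "nat \<Rightarrow> nat \<Rightarrow> nat \<Rightarrow> (nat \<times> nat) set set" where
  "ferrers_durfee k a b = {D. ferrers D \<and> durfee D = k \<and> D \<subseteq> grid a b}"

end

theory Submission
  imports Defs
begin


abbreviation AC where "AC a b k \<equiv> antichains (grid a b) prod_le k"

definition cx :: "(nat \<times> nat) set \<Rightarrow> nat \<Rightarrow> nat" where
  "cx A t = card {z\<in>A. t \<le> fst z}"
definition cy :: "(nat \<times> nat) set \<Rightarrow> nat \<Rightarrow> nat" where
  "cy A t = card {z\<in>A. t \<le> snd z}"

definition fer :: "nat \<Rightarrow> (nat \<times> nat) set \<Rightarrow> (nat \<times> nat) set" where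
  "fer k A = {(p,q). 1 \<le> p \<and> 1 \<le> q \<and> ((q \<le> k \<and> q \<le> cx A (p+1-q)) \<or> (p \<le> k \<and> p \<le> cy A (q+1-p)))}"

definition gx :: "nat \<Rightarrow> (nat \<times> nat) set \<Rightarrow> nat \<Rightarrow> nat" where
  "gx k D t = card {q\<in>{1..k}. (t+q-1, q) \<in> D}"
definition gy :: "nat \<Rightarrow> (nat \<times> nat) set \<Rightarrow> nat \<Rightarrow> nat" where
  "gy k D t = card {p\<in>{1..k}. (p, t+p-1) \<in> D}"

definition dc :: "(nat \<times> nat) set \<Rightarrow> bool" where
  "dc D \<longleftrightarrow> D \<subseteq> posquad \<and> (\<forall>x\<in>D. \<forall>y\<in>posquad. prod_le y x \<longrightarrow> y \<in> D)"

lemma ac_basic: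
  assumes "A \<in> AC a b k"
  shows "finite A" "card A = k" "A \<subseteq> grid a b"
    "\<And>z w. z\<in>A \<Longrightarrow> w\<in>A \<Longrightarrow> z \<noteq> w \<Longrightarrow> \<not> prod_le z w"
proof -
  show g: "A \<subseteq> grid a b" using assms by (simp add: antichains_def)
  show "finite A" by (rule finite_subset[OF g]) (simp add: grid_def)
  show "card A = k" using assms by (simp add: antichains_def)
  show "\<And>z w. z\<in>A \<Longrightarrow> w\<in>A \<Longrightarrow> z \<noteq> w \<Longrightarrow> \<not> prod_le z w"
    using assms by (simp add: antichains_def)
qed

lemma ac_cmp:
  assumes "A \<in> AC a b k" "z \<in> A" "w \<in> A" "z \<noteq> w"
  shows "(fst z < fst w \<and> snd w < snd z) \<or> (fst w < fst z \<and> snd z < snd w)"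
  using ac_basic(4)[OF assms(1) assms(2,3,4)] ac_basic(4)[OF assms(1) assms(3,2)] assms(4)
  by (cases z; cases w) (auto simp: prod_le_def)

lemma ac_inj:
  assumes "A \<in> AC a b k"
  shows "inj_on fst A" "inj_on snd A"
  using ac_cmp[OF assms] by (fastforce simp: inj_on_def)+

lemma ac_grid:
  assumes "A \<in> AC a b k" "z \<in> A"
  shows "1 \<le> fst z" "fst z \<le> a" "1 \<le> snd z" "snd z \<le> b"
  using ac_basic(3)[OF assms(1)] assms(2) by (auto simp: grid_def)

lemma card_inj_le_interval:
  assumes "finite S" "inj_on g S" "g ` S \<subseteq> {s..<s'}"
  shows "card S \<le> s' - s"
proof -
  have "card S = card (g ` S)" using assms by (simp add: card_image)
  also have "\<dots> \<le> card {s..<s'}" using assms by (intro card_mono) auto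
  finally show ?thesis by simp
qed

lemma cx_lip:
  assumes "A \<in> AC a b k"
  shows "cx A s \<le> cx A s' + (s' - s)"
proof -
  have f: "finite A" using ac_basic[OF assms] by simp
  have "{z\<in>A. s \<le> fst z} \<subseteq> {z\<in>A. s' \<le> fst z} \<union> {z\<in>A. fst z \<in> {s..<s'}}" by auto
  hence "cx A s \<le> card ({z\<in>A. s' \<le> fst z} \<union> {z\<in>A. fst z \<in> {s..<s'}})"
    unfolding cx_def using f by (intro card_mono) auto
  also have "\<dots> \<le> cx A s' + card {z\<in>A. fst z \<in> {s..<s'}}"
    unfolding cx_def by (rule card_Un_le)
  also have "card {z\<in>A. fst z \<in> {s..<s'}} \<le> s' - s"
    using f ac_inj[OF assms] by (intro card_inj_le_interval[where g=fst]) (auto intro: inj_on_subset)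
  finally show ?thesis by simp
qed

lemma cy_lip:
  assumes "A \<in> AC a b k"
  shows "cy A s \<le> cy A s' + (s' - s)"
proof -
  have f: "finite A" using ac_basic[OF assms] by simp
  have "{z\<in>A. s \<le> snd z} \<subseteq> {z\<in>A. s' \<le> snd z} \<union> {z\<in>A. snd z \<in> {s..<s'}}" by auto
  hence "cy A s \<le> card ({z\<in>A. s' \<le> snd z} \<union> {z\<in>A. snd z \<in> {s..<s'}})"
    unfolding cy_def using f by (intro card_mono) auto
  also have "\<dots> \<le> cy A s' + card {z\<in>A. snd z \<in> {s..<s'}}"
    unfolding cy_def by (rule card_Un_le)
  also have "card {z\<in>A. snd z \<in> {s..<s'}} \<le> s' - s"
    using f ac_inj[OF assms] by (intro card_inj_le_interval[where g=snd]) (auto intro: inj_on_subset)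
  finally show ?thesis by simp
qed

lemma cx_anti: "finite A \<Longrightarrow> s \<le> s' \<Longrightarrow> cx A s' \<le> cx A s"
  unfolding cx_def by (intro card_mono) auto
lemma cy_anti: "finite A \<Longrightarrow> s \<le> s' \<Longrightarrow> cy A s' \<le> cy A s"
  unfolding cy_def by (intro card_mono) auto

lemma cx_le_k: "A \<in> AC a b k \<Longrightarrow> cx A s \<le> k"
  unfolding cx_def using ac_basic[of A a b k] by (metis (no_types, lifting) card_mono mem_Collect_eq subsetI)
lemma cy_le_k: "A \<in> AC a b k \<Longrightarrow> cy A s \<le> k"
  unfolding cy_def using ac_basic[of A a b k] by (metis (no_types, lifting) card_mono mem_Collect_eq subsetI)

lemma cx_low:
  assumes "A \<in> AC a b k" "s \<le> 1"
  shows "cx A s = k"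
proof -
  have "{z\<in>A. s \<le> fst z} = A" using ac_grid(1)[OF assms(1)] assms(2) by force
  thus ?thesis unfolding cx_def using ac_basic[OF assms(1)] by simp
qed
lemma cy_low:
  assumes "A \<in> AC a b k" "s \<le> 1"
  shows "cy A s = k"
proof -
  have "{z\<in>A. s \<le> snd z} = A" using ac_grid(3)[OF assms(1)] assms(2) by force
  thus ?thesis unfolding cy_def using ac_basic[OF assms(1)] by simp
qed

lemma cx_high:
  assumes "A \<in> AC a b k" "1 \<le> s" shows "cx A s + s \<ge> k + 1"
proof (cases "s \<le> 1")
  case True thus ?thesis using cx_low[OF assms(1) True] assms(2) by simp
next
  case False
  have "cx A 1 \<le> cx A s + (s - 1)" by (rule cx_lip[OF assms(1)])
  thus ?thesis using cx_low[OF assms(1), of 1] False by simp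
qed
lemma cy_high:
  assumes "A \<in> AC a b k" "1 \<le> s" shows "cy A s + s \<ge> k + 1"
proof (cases "s \<le> 1")
  case True thus ?thesis using cy_low[OF assms(1) True] assms(2) by simp
next
  case False
  have "cy A 1 \<le> cy A s + (s - 1)" by (rule cy_lip[OF assms(1)])
  thus ?thesis using cy_low[OF assms(1), of 1] False by simp
qed

lemma cx_top: assumes "A \<in> AC a b k" shows "cx A s \<le> a + 1 - s"
proof -
  have e: "{z\<in>A. a+1 \<le> fst z} = {}" using ac_grid(2)[OF assms] by force
  hence "cx A (a+1) = 0" unfolding cx_def e by simp
  thus ?thesis using cx_lip[OF assms, of s "a+1"] cx_le_k[OF assms, of s] cx_anti[OF ac_basic(1)[OF assms], of "a+1" s]
    by (cases "s \<le> a+1") auto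
qed
lemma cy_top: assumes "A \<in> AC a b k" shows "cy A s \<le> b + 1 - s"
proof -
  have e: "{z\<in>A. b+1 \<le> snd z} = {}" using ac_grid(4)[OF assms] by force
  hence "cy A (b+1) = 0" unfolding cy_def e by simp
  thus ?thesis using cy_lip[OF assms, of s "b+1"] cy_le_k[OF assms, of s] cy_anti[OF ac_basic(1)[OF assms], of "b+1" s]
    by (cases "s \<le> b+1") auto
qed



lemma fer_mono_c:
  assumes "\<And>t. cx A t \<le> cx B t" "\<And>t. cy A t \<le> cy B t"
  shows "fer k A \<subseteq> fer k B"
  using assms unfolding fer_def by (auto intro: le_trans)

lemma fer_dc:
  assumes "A \<in> AC a b k"
  shows "dc (fer k A)"
  unfolding dc_def
proof (intro conjI ballI impI)
  show "fer k A \<subseteq> posquad" by (auto simp: fer_def posquad_def)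
next
  fix x y assume x: "x \<in> fer k A" and y: "y \<in> posquad" and le: "prod_le y x"
  obtain p q where xpq: "x = (p,q)" by (cases x)
  obtain p' q' where ypq: "y = (p',q')" by (cases y)
  have le': "p' \<le> p" "q' \<le> q" "1 \<le> p'" "1 \<le> q'" using le y by (auto simp: xpq ypq prod_le_def posquad_def)
  from x have "(q \<le> k \<and> q \<le> cx A (p+1-q)) \<or> (p \<le> k \<and> p \<le> cy A (q+1-p))"
    by (simp add: fer_def xpq)
  thus "y \<in> fer k A"
  proof
    assume h: "q \<le> k \<and> q \<le> cx A (p+1-q)"
    have "cx A (p+1-q) \<le> cx A (p'+1-q') + ((p'+1-q') - (p+1-q))" by (rule cx_lip[OF assms])
    moreover have "cx A 0 = k" using cx_low[OF assms] by simp
    ultimately have "q' \<le> cx A (p'+1-q')" using h le'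
      by (cases "p'+1 \<le> q'") (auto simp: not_le)
    thus ?thesis using h le' by (simp add: fer_def ypq)
  next
    assume h: "p \<le> k \<and> p \<le> cy A (q+1-p)"
    have "cy A (q+1-p) \<le> cy A (q'+1-p') + ((q'+1-p') - (q+1-p))" by (rule cy_lip[OF assms])
    moreover have "cy A 0 = k" using cy_low[OF assms] by simp
    ultimately have "p' \<le> cy A (q'+1-p')" using h le'
      by (cases "q'+1 \<le> p'") (auto simp: not_le)
    thus ?thesis using h le' by (simp add: fer_def ypq)
  qed
qed

lemma fer_grid:
  assumes "A \<in> AC a b k" "k \<le> min a b"
  shows "fer k A \<subseteq> grid a b"
proof
  fix x assume x: "x \<in> fer k A"
  obtain p q where xpq: "x = (p,q)" by (cases x)
  have pq: "1 \<le> p" "1 \<le> q" using x by (auto simp: fer_def xpq)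
  from x have "(q \<le> k \<and> q \<le> cx A (p+1-q)) \<or> (p \<le> k \<and> p \<le> cy A (q+1-p))"
    by (simp add: fer_def xpq)
  thus "x \<in> grid a b"
  proof
    assume h: "q \<le> k \<and> q \<le> cx A (p+1-q)"
    have "cx A (p+1-q) \<le> a + 1 - (p+1-q)" by (rule cx_top[OF assms(1)])
    hence "p \<le> a" using h pq assms(2) by linarith
    thus ?thesis using h pq assms(2) by (simp add: grid_def xpq)
  next
    assume h: "p \<le> k \<and> p \<le> cy A (q+1-p)"
    have "cy A (q+1-p) \<le> b + 1 - (q+1-p)" by (rule cy_top[OF assms(1)])
    hence "q \<le> b" using h pq assms(2) by linarith
    thus ?thesis using h pq assms(2) by (simp add: grid_def xpq)
  qed
qed

lemma fer_sq:
  assumes "A \<in> AC a b k"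
  shows "{1..k}\<times>{1..k} \<subseteq> fer k A" "(k+1,k+1) \<notin> fer k A"
proof -
  show "(k+1,k+1) \<notin> fer k A" by (simp add: fer_def)
  show "{1..k}\<times>{1..k} \<subseteq> fer k A"
  proof
    fix x assume "x \<in> {1..k}\<times>{1..k}"
    then obtain p q where x: "x = (p,q)" "1 \<le> p" "p \<le> k" "1 \<le> q" "q \<le> k" by auto
    have "q \<le> cx A (p+1-q)"
    proof (cases "p+1 \<le> q")
      case True thus ?thesis using cx_low[OF assms, of 0] x by simp
    next
      case False thus ?thesis using cx_high[OF assms, of "p+1-q"] x by arith
    qed
    thus "x \<in> fer k A" using x by (simp add: fer_def)
  qed
qed

lemma durfee_eq:
  assumes "{1..k}\<times>{1..k} \<subseteq> D" "(k+1,k+1) \<notin> D"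
  shows "durfee D = k"
  unfolding durfee_def
proof (rule Greatest_equality)
  show "{1..k}\<times>{1..k} \<subseteq> D" by fact
  fix y assume "{1..y}\<times>{1..y} \<subseteq> D"
  thus "y \<le> k" using assms(2)
  proof (cases "y \<le> k")
    case False
    hence "(k+1,k+1) \<in> {1..y}\<times>{1..y}" by auto
    thus ?thesis using \<open>{1..y}\<times>{1..y} \<subseteq> D\<close> assms(2) by blast
  qed
qed

lemma durfee_props:
  assumes "ferrers D" "durfee D = k"
  shows "{1..k}\<times>{1..k} \<subseteq> D" "(k+1,k+1) \<notin> D"
proof -
  have fin: "finite D" using assms by (simp add: ferrers_def)
  define P where "P = (\<lambda>m. {1..m}\<times>{1..m} \<subseteq> D)"
  have P0: "P 0" by (simp add: P_def)
  have bnd: "\<And>y. P y \<Longrightarrow> y \<le> Max (fst ` D)"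
  proof -
    fix y assume "P y"
    show "y \<le> Max (fst ` D)"
    proof (cases "y = 0")
      case False
      hence "(y,y) \<in> D" using \<open>P y\<close> by (auto simp: P_def)
      thus ?thesis using fin by (metis Max_ge finite_imageI fst_conv image_eqI)
    qed simp
  qed
  have "P (Greatest P)" by (rule GreatestI_nat[where P=P and k=0, OF P0 bnd])
  thus "{1..k}\<times>{1..k} \<subseteq> D" using assms(2) by (simp add: P_def durfee_def)
  show "(k+1,k+1) \<notin> D"
  proof
    assume kk: "(k+1,k+1) \<in> D"
    have "P (k+1)" unfolding P_def
    proof
      fix x assume "x \<in> {1..k+1}\<times>{1..k+1}"
      thus "x \<in> D" using kk assms(1) unfolding ferrers_def
        by (cases x) (auto simp: posquad_def prod_le_def)
    qed
    hence "k+1 \<le> Greatest P" by (rule Greatest_le_nat[where P=P and k="k+1", OF _ bnd])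
    thus False using assms(2) by (simp add: P_def durfee_def)
  qed
qed

lemma fer_FD:
  assumes "A \<in> AC a b k" "k \<le> min a b"
  shows "fer k A \<in> ferrers_durfee k a b"
proof -
  have g: "fer k A \<subseteq> grid a b" by (rule fer_grid[OF assms])
  have "finite (fer k A)" by (rule finite_subset[OF g]) (simp add: grid_def)
  hence "ferrers (fer k A)" using fer_dc[OF assms(1)] by (simp add: ferrers_def dc_def)
  thus ?thesis using g durfee_eq[OF fer_sq[OF assms(1)]] by (simp add: ferrers_durfee_def)
qed



lemma dc_down:
  assumes "dc D" "(p,q) \<in> D" "p' \<le> p" "q' \<le> q" "1 \<le> p'" "1 \<le> q'"
  shows "(p',q') \<in> D"
  using assms unfolding dc_def posquad_def prod_le_def by force

lemma gx_ge:
  assumes "dc D" "(p,q) \<in> D" "1 \<le> q" "q \<le> k" "q \<le> p"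
  shows "q \<le> gx k D (p+1-q)"
proof -
  have "{1..q} \<subseteq> {q'\<in>{1..k}. (p+1-q+q'-1, q') \<in> D}"
  proof
    fix q' assume "q' \<in> {1..q}"
    thus "q' \<in> {q'\<in>{1..k}. (p+1-q+q'-1, q') \<in> D}"
      using assms dc_down[OF assms(1,2), of "p+1-q+q'-1" q'] by auto
  qed
  hence "card {1..q} \<le> gx k D (p+1-q)" unfolding gx_def by (intro card_mono) auto
  thus ?thesis by simp
qed

lemma gy_ge:
  assumes "dc D" "(p,q) \<in> D" "1 \<le> p" "p \<le> k" "p \<le> q"
  shows "p \<le> gy k D (q+1-p)"
proof -
  have "{1..p} \<subseteq> {p'\<in>{1..k}. (p', q+1-p+p'-1) \<in> D}"
  proof
    fix p' assume "p' \<in> {1..p}"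
    thus "p' \<in> {p'\<in>{1..k}. (p', q+1-p+p'-1) \<in> D}"
      using assms dc_down[OF assms(1,2), of p' "q+1-p+p'-1"] by auto
  qed
  hence "card {1..p} \<le> gy k D (q+1-p)" unfolding gy_def by (intro card_mono) auto
  thus ?thesis by simp
qed



lemma gx_mem:
  assumes "dc D" "1 \<le> q" "q \<le> k" "1 \<le> t" "q \<le> gx k D t"
  shows "(t+q-1, q) \<in> D"
proof (rule ccontr)
  assume n: "(t+q-1, q) \<notin> D"
  have "{q'\<in>{1..k}. (t+q'-1, q') \<in> D} \<subseteq> {1..<q}"
  proof
    fix q' assume q': "q' \<in> {q'\<in>{1..k}. (t+q'-1, q') \<in> D}"
    show "q' \<in> {1..<q}"
    proof (rule ccontr)
      assume "q' \<notin> {1..<q}"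
      hence "q \<le> q'" using q' by auto
      hence "(t+q-1, q) \<in> D" using q' assms dc_down[OF assms(1), of "t+q'-1" q' "t+q-1" q] by auto
      thus False using n by simp
    qed
  qed
  hence "gx k D t \<le> card {1..<q}" unfolding gx_def by (intro card_mono) auto
  thus False using assms by simp
qed

lemma gy_mem:
  assumes "dc D" "1 \<le> p" "p \<le> k" "1 \<le> t" "p \<le> gy k D t"
  shows "(p, t+p-1) \<in> D"
proof (rule ccontr)
  assume n: "(p, t+p-1) \<notin> D"
  have "{p'\<in>{1..k}. (p', t+p'-1) \<in> D} \<subseteq> {1..<p}"
  proof
    fix p' assume p': "p' \<in> {p'\<in>{1..k}. (p', t+p'-1) \<in> D}"
    show "p' \<in> {1..<p}"
    proof (rule ccontr)
      assume "p' \<notin> {1..<p}"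
      hence "p \<le> p'" using p' by auto
      hence "(p, t+p-1) \<in> D" using p' assms dc_down[OF assms(1), of p' "t+p'-1" p "t+p-1"] by auto
      thus False using n by simp
    qed
  qed
  hence "gy k D t \<le> card {1..<p}" unfolding gy_def by (intro card_mono) auto
  thus False using assms by simp
qed



lemma dc_le:
  assumes "dc D" "dc D'" "(k+1,k+1) \<notin> D"
    and "\<And>t. 1 \<le> t \<Longrightarrow> gx k D t \<le> gx k D' t" "\<And>t. 1 \<le> t \<Longrightarrow> gy k D t \<le> gy k D' t"
  shows "D \<subseteq> D'"
proof
  fix x assume x: "x \<in> D"
  obtain p q where xpq: "x = (p,q)" by (cases x)
  have pq: "1 \<le> p" "1 \<le> q" using x assms(1) by (auto simp: dc_def posquad_def xpq)
  have "q \<le> k \<or> p \<le> k"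
  proof (rule ccontr)
    assume "\<not> (q \<le> k \<or> p \<le> k)"
    hence "(k+1,k+1) \<in> D" using x dc_down[OF assms(1), of p q "k+1" "k+1"] by (auto simp: xpq)
    thus False using assms(3) by simp
  qed
  hence "(q \<le> k \<and> q \<le> p) \<or> (p \<le> k \<and> p \<le> q)" by auto
  thus "x \<in> D'"
  proof
    assume h: "q \<le> k \<and> q \<le> p"
    have "q \<le> gx k D (p+1-q)" using gx_ge[OF assms(1) x[unfolded xpq]] h pq by simp
    also have "\<dots> \<le> gx k D' (p+1-q)" using assms(4)[of "p+1-q"] h by (auto simp: Suc_diff_le)
    finally have "q \<le> gx k D' (p+1-q)" .
    hence "((p+1-q)+q-1, q) \<in> D'" using gx_mem[OF assms(2), of q k "p+1-q"] h pq by (auto simp: Suc_diff_le)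
    moreover have "(p+1-q)+q-1 = p" using h by simp
    ultimately show ?thesis by (simp add: xpq)
  next
    assume h: "p \<le> k \<and> p \<le> q"
    have "p \<le> gy k D (q+1-p)" using gy_ge[OF assms(1) x[unfolded xpq]] h pq by simp
    also have "\<dots> \<le> gy k D' (q+1-p)" using assms(5)[of "q+1-p"] h by (auto simp: Suc_diff_le)
    finally have "p \<le> gy k D' (q+1-p)" .
    hence "(p, (q+1-p)+p-1) \<in> D'" using gy_mem[OF assms(2), of p k "q+1-p"] h pq by (auto simp: Suc_diff_le)
    moreover have "(q+1-p)+p-1 = q" using h by simp
    ultimately show ?thesis by (simp add: xpq)
  qed
qed



lemma fer_memD: "(p,q) \<in> fer k A \<Longrightarrow> 1 \<le> p \<and> 1 \<le> q \<and> ((q \<le> k \<and> q \<le> cx A (p+1-q)) \<or> (p \<le> k \<and> p \<le> cy A (q+1-p)))"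
  by (simp add: fer_def)

lemma gx_fer:
  assumes "A \<in> AC a b k" "1 \<le> t"
  shows "gx k (fer k A) t = cx A t"
proof -
  have "{q\<in>{1..k}. (t+q-1, q) \<in> fer k A} = {1..cx A t}"
  proof (intro set_eqI iffI)
    fix q assume q: "q \<in> {q\<in>{1..k}. (t+q-1, q) \<in> fer k A}"
    hence q1: "1 \<le> q" "q \<le> k" and mem: "(t+q-1, q) \<in> fer k A" by auto
    have eq: "t+q-1+1-q = t" using q1 assms(2) by simp
    have "(q \<le> cx A t) \<or> (t+q-1 \<le> k)" using fer_memD[OF mem, unfolded eq] by blast
    moreover have "cx A t + t \<ge> k+1" by (rule cx_high[OF assms])
    ultimately show "q \<in> {1..cx A t}" using q1 by auto
  next
    fix q assume "q \<in> {1..cx A t}"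
    thus "q \<in> {q\<in>{1..k}. (t+q-1, q) \<in> fer k A}"
      using cx_le_k[OF assms(1), of t] assms(2) by (auto simp: fer_def)
  qed
  thus ?thesis by (simp add: gx_def)
qed

lemma gy_fer:
  assumes "A \<in> AC a b k" "1 \<le> t"
  shows "gy k (fer k A) t = cy A t"
proof -
  have "{p\<in>{1..k}. (p, t+p-1) \<in> fer k A} = {1..cy A t}"
  proof (intro set_eqI iffI)
    fix p assume p: "p \<in> {p\<in>{1..k}. (p, t+p-1) \<in> fer k A}"
    hence p1: "1 \<le> p" "p \<le> k" and mem: "(p, t+p-1) \<in> fer k A" by auto
    have eq: "t+p-1+1-p = t" using p1 assms(2) by simp
    have "(p \<le> cy A t) \<or> (t+p-1 \<le> k)" using fer_memD[OF mem, unfolded eq] by blast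
    moreover have "cy A t + t \<ge> k+1" by (rule cy_high[OF assms])
    ultimately show "p \<in> {1..cy A t}" using p1 by auto
  next
    fix p assume "p \<in> {1..cy A t}"
    thus "p \<in> {p\<in>{1..k}. (p, t+p-1) \<in> fer k A}"
      using cy_le_k[OF assms(1), of t] assms(2) by (auto simp: fer_def)
  qed
  thus ?thesis by (simp add: gy_def)
qed



lemma gx_anti: "dc D \<Longrightarrow> 1 \<le> s \<Longrightarrow> s \<le> t \<Longrightarrow> gx k D t \<le> gx k D s"
  unfolding gx_def by (intro card_mono) (auto intro: dc_down[of D "t+_-1" _])
lemma gy_anti: "dc D \<Longrightarrow> 1 \<le> s \<Longrightarrow> s \<le> t \<Longrightarrow> gy k D t \<le> gy k D s"
  unfolding gy_def by (intro card_mono) (auto intro: dc_down[of D _ "t+_-1"])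



lemma gx_lip:
  assumes "dc D" shows "gx k D t \<le> gx k D (t+1) + 1"
proof -
  have "{q\<in>{1..k}. (t+q-1, q) \<in> D} \<subseteq> insert 1 (Suc ` {q\<in>{1..k}. (t+1+q-1, q) \<in> D})"
  proof
    fix q assume q: "q \<in> {q\<in>{1..k}. (t+q-1, q) \<in> D}"
    show "q \<in> insert 1 (Suc ` {q\<in>{1..k}. (t+1+q-1, q) \<in> D})"
    proof (cases "q = 1")
      case False
      hence "(t+1+(q-1)-1, q-1) \<in> D" using q dc_down[OF assms, of "t+q-1" q "t+q-1" "q-1"] by auto
      hence "q - 1 \<in> {q\<in>{1..k}. (t+1+q-1, q) \<in> D}" using q False by auto
      thus ?thesis using False q by (auto intro!: image_eqI[where x="q-1"])
    qed simp
  qed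
  hence "gx k D t \<le> card (insert 1 (Suc ` {q\<in>{1..k}. (t+1+q-1, q) \<in> D}))"
    unfolding gx_def by (intro card_mono) auto
  also have "\<dots> \<le> card (Suc ` {q\<in>{1..k}. (t+1+q-1, q) \<in> D}) + 1" by (simp add: card_insert_le_m1 card_insert_if)
  also have "\<dots> = gx k D (t+1) + 1" unfolding gx_def by (simp add: card_image)
  finally show ?thesis .
qed

lemma gy_lip:
  assumes "dc D" shows "gy k D t \<le> gy k D (t+1) + 1"
proof -
  have "{p\<in>{1..k}. (p, t+p-1) \<in> D} \<subseteq> insert 1 (Suc ` {p\<in>{1..k}. (p, t+1+p-1) \<in> D})"
  proof
    fix p assume p: "p \<in> {p\<in>{1..k}. (p, t+p-1) \<in> D}"
    show "p \<in> insert 1 (Suc ` {p\<in>{1..k}. (p, t+1+p-1) \<in> D})"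
    proof (cases "p = 1")
      case False
      hence "(p-1, t+1+(p-1)-1) \<in> D" using p dc_down[OF assms, of p "t+p-1" "p-1" "t+p-1"] by auto
      hence "p - 1 \<in> {p\<in>{1..k}. (p, t+1+p-1) \<in> D}" using p False by auto
      thus ?thesis using False p by (auto intro!: image_eqI[where x="p-1"])
    qed simp
  qed
  hence "gy k D t \<le> card (insert 1 (Suc ` {p\<in>{1..k}. (p, t+1+p-1) \<in> D}))"
    unfolding gy_def by (intro card_mono) auto
  also have "\<dots> \<le> card (Suc ` {p\<in>{1..k}. (p, t+1+p-1) \<in> D}) + 1" by (simp add: card_insert_le_m1 card_insert_if)
  also have "\<dots> = gy k D (t+1) + 1" unfolding gy_def by (simp add: card_image)
  finally show ?thesis .
qed



lemma gx_pos: "D \<subseteq> grid a b \<Longrightarrow> 0 < gx k D t \<Longrightarrow> t \<le> a"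
proof -
  assume D: "D \<subseteq> grid a b" and "0 < gx k D t"
  then obtain q where "q \<in> {1..k}" "(t+q-1, q) \<in> D" unfolding gx_def by (auto simp: card_gt_0_iff)
  hence "(t+q-1, q) \<in> grid a b" "1 \<le> q" using D by auto
  thus "t \<le> a" by (auto simp: grid_def)
qed
lemma gy_pos: "D \<subseteq> grid a b \<Longrightarrow> 0 < gy k D t \<Longrightarrow> t \<le> b"
proof -
  assume D: "D \<subseteq> grid a b" and "0 < gy k D t"
  then obtain p where "p \<in> {1..k}" "(p, t+p-1) \<in> D" unfolding gy_def by (auto simp: card_gt_0_iff)
  hence "(p, t+p-1) \<in> grid a b" "1 \<le> p" using D by auto
  thus "t \<le> b" by (auto simp: grid_def)
qed

lemma gx_le_k: "gx k D t \<le> k"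
  unfolding gx_def by (metis (no_types, lifting) card_atLeastAtMost card_mono diff_Suc_1 finite_atLeastAtMost mem_Collect_eq subsetI)
lemma gy_le_k: "gy k D t \<le> k"
  unfolding gy_def by (metis (no_types, lifting) card_atLeastAtMost card_mono diff_Suc_1 finite_atLeastAtMost mem_Collect_eq subsetI)




lemma card_swap:
  assumes "finite A" "x \<in> A" "y \<notin> A"
  shows "card {w \<in> insert y (A - {x}). P w} + (if P x then 1 else 0) = card {w\<in>A. P w} + (if P y then 1 else 0)"
proof -
  define S where "S = {w\<in>A. P w} - {x}"
  have fS: "finite S" using assms(1) by (simp add: S_def)
  have yS: "y \<notin> S" using assms(3) by (simp add: S_def)
  have e1: "{w \<in> insert y (A - {x}). P w} = (if P y then insert y S else S)"
    using assms(2,3) by (auto simp: S_def)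
  have e2: "card {w\<in>A. P w} = card S + (if P x then 1 else 0)"
  proof (cases "P x")
    case True
    have "insert x S = {w\<in>A. P w}" using assms(2) True by (auto simp: S_def)
    hence "card {w\<in>A. P w} = card (insert x S)" by simp
    also have "\<dots> = card S + 1" using card_insert_disjoint[OF fS, of x] by (simp add: S_def del: insert_Diff_single)
    finally show ?thesis using True by simp
  next
    case False
    hence "{w\<in>A. P w} = S" by (auto simp: S_def)
    thus ?thesis using False by simp
  qed
  show ?thesis using e1 e2 fS yS by (cases "P y") auto
qed

lemma step_decomp:
  assumes "antichain_step P le k A B"
  shows "\<exists>x y. x \<in> A \<and> y \<notin> A \<and> B = insert y (A - {x}) \<and> le x y \<and> x \<noteq> y"
proof -
  obtain x y where h: "A - B = {x}" "B - A = {y}" "le x y" "x \<noteq> y"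
    using assms by (auto simp: antichain_step_def)
  have "x \<in> A" "y \<notin> A" "B = insert y (A - {x})" using h(1,2) by blast+
  thus ?thesis using h by blast
qed

lemma step_mono:
  assumes "antichain_step (grid a b) prod_le k A B"
  shows "cx A t \<le> cx B t" "cy A t \<le> cy B t"
proof -
  have A: "A \<in> AC a b k" using assms by (simp add: antichain_step_def)
  obtain x y where h: "x \<in> A" "y \<notin> A" "B = insert y (A - {x})" "prod_le x y"
    using step_decomp[OF assms] by blast
  have f: "finite A" using ac_basic[OF A] by simp
  show "cx A t \<le> cx B t"
  proof -
    have e: "cx B t + (if t \<le> fst x then 1 else 0) = cx A t + (if t \<le> fst y then 1 else 0)"
      using card_swap[OF f h(1,2), of "\<lambda>w. t \<le> fst w"] h(3) unfolding cx_def by simp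
    have "t \<le> fst x \<longrightarrow> t \<le> fst y" using h(4) by (auto simp: prod_le_def)
    thus ?thesis using e by (cases "t \<le> fst x"; cases "t \<le> fst y") auto
  qed
  show "cy A t \<le> cy B t"
  proof -
    have e: "cy B t + (if t \<le> snd x then 1 else 0) = cy A t + (if t \<le> snd y then 1 else 0)"
      using card_swap[OF f h(1,2), of "\<lambda>w. t \<le> snd w"] h(3) unfolding cy_def by simp
    have "t \<le> snd x \<longrightarrow> t \<le> snd y" using h(4) by (auto simp: prod_le_def)
    thus ?thesis using e by (cases "t \<le> snd x"; cases "t \<le> snd y") auto
  qed
qed

lemma le_mono:
  assumes "antichain_le (grid a b) prod_le k A B"
  shows "fer k A \<subseteq> fer k B"
  using assms unfolding antichain_le_def
proof (induction rule: rtranclp_induct)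
  case base thus ?case by simp
next
  case (step y z)
  have "fer k y \<subseteq> fer k z" by (rule fer_mono_c) (use step_mono[OF step(2)] in auto)
  thus ?case using step(3) by blast
qed

lemma cx_split: "finite A \<Longrightarrow> cx A s = cx A (Suc s) + card {z\<in>A. fst z = s}"
proof -
  assume f: "finite A"
  have "{z\<in>A. s \<le> fst z} = {z\<in>A. Suc s \<le> fst z} \<union> {z\<in>A. fst z = s}" by auto
  moreover have "card ({z\<in>A. Suc s \<le> fst z} \<union> {z\<in>A. fst z = s}) = card {z\<in>A. Suc s \<le> fst z} + card {z\<in>A. fst z = s}"
    using f by (intro card_Un_disjoint) auto
  ultimately show ?thesis by (simp add: cx_def)
qed

lemma cy_split: "finite A \<Longrightarrow> cy A s = cy A (Suc s) + card {z\<in>A. snd z = s}"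
proof -
  assume f: "finite A"
  have "{z\<in>A. s \<le> snd z} = {z\<in>A. Suc s \<le> snd z} \<union> {z\<in>A. snd z = s}" by auto
  moreover have "card ({z\<in>A. Suc s \<le> snd z} \<union> {z\<in>A. snd z = s}) = card {z\<in>A. Suc s \<le> snd z} + card {z\<in>A. snd z = s}"
    using f by (intro card_Un_disjoint) auto
  ultimately show ?thesis by (simp add: cy_def)
qed

lemma mem_fst_card: "finite A \<Longrightarrow> (u \<in> fst ` A) = (0 < card {z\<in>A. fst z = u})"
proof -
  assume f: "finite A"
  have "(u \<in> fst ` A) = ({z\<in>A. fst z = u} \<noteq> {})" by force
  also have "\<dots> = (0 < card {z\<in>A. fst z = u})" using f by (simp add: card_gt_0_iff)
  finally show ?thesis .
qed

lemma cx_det: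
  assumes "finite A" "finite B" "\<And>t. cx A t = cx B t"
  shows "fst ` A = fst ` B"
proof -
  have c: "card {z\<in>A. fst z = s} = card {z\<in>B. fst z = s}" for s
    using cx_split[OF assms(1), of s] cx_split[OF assms(2), of s] assms(3)[of s] assms(3)[of "Suc s"] by linarith
  show ?thesis
  proof (intro set_eqI)
    fix u show "u \<in> fst ` A \<longleftrightarrow> u \<in> fst ` B"
      using mem_fst_card[OF assms(1), of u] mem_fst_card[OF assms(2), of u] c[of u] by simp
  qed
qed

lemma mem_snd_card: "finite A \<Longrightarrow> (u \<in> snd ` A) = (0 < card {z\<in>A. snd z = u})"
proof -
  assume f: "finite A"
  have "(u \<in> snd ` A) = ({z\<in>A. snd z = u} \<noteq> {})" by force
  also have "\<dots> = (0 < card {z\<in>A. snd z = u})" using f by (simp add: card_gt_0_iff)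
  finally show ?thesis .
qed

lemma cy_det:
  assumes "finite A" "finite B" "\<And>t. cy A t = cy B t"
  shows "snd ` A = snd ` B"
proof -
  have c: "card {z\<in>A. snd z = s} = card {z\<in>B. snd z = s}" for s
    using cy_split[OF assms(1), of s] cy_split[OF assms(2), of s] assms(3)[of s] assms(3)[of "Suc s"] by linarith
  show ?thesis
  proof (intro set_eqI)
    fix u show "u \<in> snd ` A \<longleftrightarrow> u \<in> snd ` B"
      using mem_snd_card[OF assms(1), of u] mem_snd_card[OF assms(2), of u] c[of u] by simp
  qed
qed

lemma rank:
  assumes A: "A \<in> AC a b k" and z: "z \<in> A"
  shows "card {u\<in>fst ` A. u < fst z} = card {v\<in>snd ` A. snd z < v}"
proof -
  have e: "{w\<in>A. fst w < fst z} = {w\<in>A. snd z < snd w}"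
  proof (intro set_eqI iffI)
    fix w assume "w \<in> {w\<in>A. fst w < fst z}"
    hence w: "w\<in>A" "fst w < fst z" by auto
    hence "w \<noteq> z" by auto
    from ac_cmp[OF A w(1) z this] w show "w \<in> {w\<in>A. snd z < snd w}" by auto
  next
    fix w assume "w \<in> {w\<in>A. snd z < snd w}"
    hence w: "w\<in>A" "snd z < snd w" by auto
    hence "w \<noteq> z" by auto
    from ac_cmp[OF A w(1) z this] w show "w \<in> {w\<in>A. fst w < fst z}" by auto
  qed
  have "card {u\<in>fst ` A. u < fst z} = card (fst ` {w\<in>A. fst w < fst z})"
    by (rule arg_cong[where f=card]) auto
  also have "\<dots> = card {w\<in>A. fst w < fst z}"
    by (rule card_image, rule inj_on_subset[OF ac_inj(1)[OF A]]) auto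
  also have "\<dots> = card {w\<in>A. snd z < snd w}" using e by simp
  also have "\<dots> = card (snd ` {w\<in>A. snd z < snd w})"
    by (rule card_image[symmetric], rule inj_on_subset[OF ac_inj(2)[OF A]]) auto
  also have "\<dots> = card {v\<in>snd ` A. snd z < v}"
    by (rule arg_cong[where f=card]) auto
  finally show ?thesis .
qed

lemma card_gt_strict:
  fixes Y :: "nat set"
  assumes "finite Y" "y \<in> Y" "y' \<in> Y" "y < y'"
  shows "card {v\<in>Y. y' < v} < card {v\<in>Y. y < v}"
proof -
  have "{v\<in>Y. y'<v} \<subseteq> {v\<in>Y. y<v}" using assms(4) by auto
  moreover have "y' \<in> {v\<in>Y. y<v}" "y' \<notin> {v\<in>Y. y'<v}" using assms by auto
  ultimately have "{v\<in>Y. y'<v} \<subset> {v\<in>Y. y<v}" by blast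
  moreover have "finite {v\<in>Y. y<v}" using assms(1) by simp
  ultimately show ?thesis by (simp add: psubset_card_mono)
qed

lemma ac_sub:
  assumes A: "A \<in> AC a b k" and B: "B \<in> AC a b k"
    and X: "fst ` A = fst ` B" and Y: "snd ` A = snd ` B"
  shows "A \<subseteq> B"
proof
  fix z assume z: "z \<in> A"
  obtain z' where z': "z' \<in> B" "fst z' = fst z" using X z by (metis image_eqI imageE)
  have "card {v\<in>snd ` A. snd z < v} = card {v\<in>snd ` A. snd z' < v}"
    using rank[OF A z] rank[OF B z'(1)] X Y z'(2) by simp
  moreover have fY: "finite (snd ` A)" using ac_basic(1)[OF A] by simp
  moreover have "snd z \<in> snd ` A" "snd z' \<in> snd ` A" using z z'(1) Y by auto
  ultimately have "snd z = snd z'"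
    using card_gt_strict[of "snd ` A" "snd z" "snd z'"] card_gt_strict[of "snd ` A" "snd z'" "snd z"]
    by (cases "snd z < snd z'"; cases "snd z' < snd z") auto
  hence "z = z'" using z'(2) by (simp add: prod_eq_iff)
  thus "z \<in> B" using z' by simp
qed

lemma fer_inj:
  assumes A: "A \<in> AC a b k" and B: "B \<in> AC a b k" and e: "fer k A = fer k B"
  shows "A = B"
proof -
  have cxe: "\<And>t. cx A t = cx B t"
  proof -
    fix t show "cx A t = cx B t"
    proof (cases "1 \<le> t")
      case True thus ?thesis using gx_fer[OF A True] gx_fer[OF B True] e by simp
    next
      case False thus ?thesis using cx_low[OF A] cx_low[OF B] by simp
    qed
  qed
  have cye: "\<And>t. cy A t = cy B t"
  proof -
    fix t show "cy A t = cy B t"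
    proof (cases "1 \<le> t")
      case True thus ?thesis using gy_fer[OF A True] gy_fer[OF B True] e by simp
    next
      case False thus ?thesis using cy_low[OF A] cy_low[OF B] by simp
    qed
  qed
  have fA: "finite A" and fB: "finite B" using ac_basic A B by auto
  have X: "fst ` A = fst ` B" by (rule cx_det[OF fA fB cxe])
  have Y: "snd ` A = snd ` B" by (rule cy_det[OF fA fB cye])
  show ?thesis using ac_sub[OF A B X Y] ac_sub[OF B A X[symmetric] Y[symmetric]] by blast
qed



lemma run_x:
  assumes A: "A \<in> AC a b k" and hlip: "\<And>t. h t \<le> h (t+1) + 1"
  shows "cx A s < h s \<Longrightarrow> z0 \<in> A \<Longrightarrow> fst z0 + 1 = s \<Longrightarrow>
    \<exists>z\<in>A. (\<forall>w\<in>A. fst w \<noteq> fst z + 1) \<and> cx A (fst z + 1) < h (fst z + 1)"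
proof (induction "a + 1 - s" arbitrary: s z0 rule: less_induct)
  case less
  show ?case
  proof (cases "\<exists>w\<in>A. fst w = s")
    case False
    thus ?thesis using less.prems by auto
  next
    case True
    then obtain w where w: "w \<in> A" "fst w = s" by blast
    have sa: "s \<le> a" using ac_grid(2)[OF A w(1)] w(2) by simp
    have ne: "w \<in> {z\<in>A. fst z = s}" using w by simp
    have fin: "finite {z\<in>A. fst z = s}" using ac_basic(1)[OF A] by simp
    have "{z\<in>A. fst z = s} \<noteq> {}" using ne by blast
    hence "card {z\<in>A. fst z = s} > 0" by (rule card_gt_0_iff[THEN iffD2, OF conjI[OF _ fin]])
    hence "card {z\<in>A. fst z = s} \<ge> 1" by simp
    hence "cx A (s+1) < h (s+1)"
      using cx_split[OF ac_basic(1)[OF A], of s] less.prems(1) hlip[of s] by simp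
    moreover have "a + 1 - (s+1) < a + 1 - s" using sa by simp
    ultimately show ?thesis using less.hyps[of "s+1" w] w by simp
  qed
qed

lemma run_y:
  assumes A: "A \<in> AC a b k" and hlip: "\<And>t. h t \<le> h (t+1) + 1"
  shows "cy A s < h s \<Longrightarrow> z0 \<in> A \<Longrightarrow> snd z0 + 1 = s \<Longrightarrow>
    \<exists>z\<in>A. (\<forall>w\<in>A. snd w \<noteq> snd z + 1) \<and> cy A (snd z + 1) < h (snd z + 1)"
proof (induction "b + 1 - s" arbitrary: s z0 rule: less_induct)
  case less
  show ?case
  proof (cases "\<exists>w\<in>A. snd w = s")
    case False
    thus ?thesis using less.prems by auto
  next
    case True
    then obtain w where w: "w \<in> A" "snd w = s" by blast
    have sa: "s \<le> b" using ac_grid(4)[OF A w(1)] w(2) by simp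
    have ne: "w \<in> {z\<in>A. snd z = s}" using w by simp
    have fin: "finite {z\<in>A. snd z = s}" using ac_basic(1)[OF A] by simp
    have "{z\<in>A. snd z = s} \<noteq> {}" using ne by blast
    hence "card {z\<in>A. snd z = s} > 0" by (rule card_gt_0_iff[THEN iffD2, OF conjI[OF _ fin]])
    hence "card {z\<in>A. snd z = s} \<ge> 1" by simp
    hence "cy A (s+1) < h (s+1)"
      using cy_split[OF ac_basic(1)[OF A], of s] less.prems(1) hlip[of s] by simp
    moreover have "b + 1 - (s+1) < b + 1 - s" using sa by simp
    ultimately show ?thesis using less.hyps[of "s+1" w] w by simp
  qed
qed

lemma start_x:
  assumes A: "A \<in> AC a b k"
    and hanti: "\<And>s t. 1 \<le> s \<Longrightarrow> s \<le> t \<Longrightarrow> h t \<le> h s"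
    and hle: "\<And>t. 1 \<le> t \<Longrightarrow> cx A t \<le> h t" and h1: "h 1 \<le> k"
    and ex: "1 \<le> t0" "cx A t0 < h t0"
  shows "\<exists>s z0. cx A s < h s \<and> z0 \<in> A \<and> fst z0 + 1 = s"
proof -
  define t where "t = (LEAST t. 1 \<le> t \<and> cx A t < h t)"
  have tP: "1 \<le> t \<and> cx A t < h t" unfolding t_def by (rule LeastI[of _ t0]) (use ex in simp)
  have "t \<noteq> 1" using tP cx_low[OF A, of 1] h1 by auto
  hence t2: "2 \<le> t" using tP by simp
  have "\<not> (1 \<le> t - 1 \<and> cx A (t-1) < h (t-1))"
    unfolding t_def by (rule not_less_Least) (use t2 in \<open>simp add: t_def\<close>)
  hence "h (t-1) \<le> cx A (t-1)" using t2 by (auto simp: not_less)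
  moreover have "h t \<le> h (t-1)" using hanti[of "t-1" t] t2 by simp
  moreover have "cx A (t-1) = cx A t + card {z\<in>A. fst z = t-1}"
    using cx_split[OF ac_basic(1)[OF A], of "t-1"] t2 by simp
  ultimately have "card {z\<in>A. fst z = t-1} > 0" using tP by simp
  then obtain z0 where "z0 \<in> A" "fst z0 = t - 1" by (auto simp: card_gt_0_iff)
  thus ?thesis using tP t2 by (intro exI[of _ t] exI[of _ z0]) simp
qed

lemma start_y:
  assumes A: "A \<in> AC a b k"
    and hanti: "\<And>s t. 1 \<le> s \<Longrightarrow> s \<le> t \<Longrightarrow> h t \<le> h s"
    and hle: "\<And>t. 1 \<le> t \<Longrightarrow> cy A t \<le> h t" and h1: "h 1 \<le> k"
    and ex: "1 \<le> t0" "cy A t0 < h t0"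
  shows "\<exists>s z0. cy A s < h s \<and> z0 \<in> A \<and> snd z0 + 1 = s"
proof -
  define t where "t = (LEAST t. 1 \<le> t \<and> cy A t < h t)"
  have tP: "1 \<le> t \<and> cy A t < h t" unfolding t_def by (rule LeastI[of _ t0]) (use ex in simp)
  have "t \<noteq> 1" using tP cy_low[OF A, of 1] h1 by auto
  hence t2: "2 \<le> t" using tP by simp
  have "\<not> (1 \<le> t - 1 \<and> cy A (t-1) < h (t-1))"
    unfolding t_def by (rule not_less_Least) (use t2 in \<open>simp add: t_def\<close>)
  hence "h (t-1) \<le> cy A (t-1)" using t2 by (auto simp: not_less)
  moreover have "h t \<le> h (t-1)" using hanti[of "t-1" t] t2 by simp
  moreover have "cy A (t-1) = cy A t + card {z\<in>A. snd z = t-1}"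
    using cy_split[OF ac_basic(1)[OF A], of "t-1"] t2 by simp
  ultimately have "card {z\<in>A. snd z = t-1} > 0" using tP by simp
  then obtain z0 where "z0 \<in> A" "snd z0 = t - 1" by (auto simp: card_gt_0_iff)
  thus ?thesis using tP t2 by (intro exI[of _ t] exI[of _ z0]) simp
qed



lemma move_x:
  assumes A: "A \<in> AC a b k"
    and hanti: "\<And>s t. 1 \<le> s \<Longrightarrow> s \<le> t \<Longrightarrow> h t \<le> h s"
    and hlip: "\<And>t. h t \<le> h (t+1) + 1"
    and hpos: "\<And>t. 0 < h t \<Longrightarrow> t \<le> a"
    and hle: "\<And>t. 1 \<le> t \<Longrightarrow> cx A t \<le> h t" and h1: "h 1 \<le> k"
    and ex: "1 \<le> t0" "cx A t0 < h t0"
  shows "\<exists>A'. antichain_step (grid a b) prod_le k A A' \<and> (\<forall>t. 1 \<le> t \<longrightarrow> cx A' t \<le> h t) \<and> (\<forall>t. cy A' t = cy A t)"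
proof -
  obtain s z0 where s: "cx A s < h s" "z0 \<in> A" "fst z0 + 1 = s"
    using start_x[OF A hanti hle h1 ex] by blast
  obtain z where z: "z \<in> A" "\<forall>w\<in>A. fst w \<noteq> fst z + 1" "cx A (fst z + 1) < h (fst z + 1)"
    using run_x[OF A hlip s] by blast
  define n where "n = (fst z + 1, snd z)"
  define A' where "A' = insert n (A - {z})"
  have fA: "finite A" using ac_basic(1)[OF A] .
  have nA: "n \<notin> A" using z(2) by (auto simp: n_def)
  have za: "fst z + 1 \<le> a" using hpos[of "fst z + 1"] z(3) by simp
  have zg: "1 \<le> snd z" "snd z \<le> b" using ac_grid[OF A z(1)] by auto
  have ng: "n \<in> grid a b" using za zg by (simp add: n_def grid_def)
  have sub: "A' \<subseteq> grid a b" using ng ac_basic(3)[OF A] by (auto simp: A'_def)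
  have k1: "1 \<le> k" using ac_basic(2)[OF A] z(1) fA
    by (metis One_nat_def Suc_leI card_gt_0_iff empty_iff)
  have cardA': "card A' = k"
  proof -
    have "card (A - {z}) = k - 1" using ac_basic(2)[OF A] z(1) fA by simp
    moreover have "n \<notin> A - {z}" using nA by simp
    ultimately show ?thesis using fA k1 by (simp add: A'_def)
  qed
  have anti: "\<forall>x\<in>A'. \<forall>y\<in>A'. x \<noteq> y \<longrightarrow> \<not> prod_le x y"
  proof (intro ballI impI)
    fix x y assume x: "x \<in> A'" and y: "y \<in> A'" and xy: "x \<noteq> y"
    show "\<not> prod_le x y"
    proof (cases "x = n")
      case True
      hence yA: "y \<in> A" "y \<noteq> z" using y xy by (auto simp: A'_def)
      from ac_cmp[OF A yA(1) z(1) yA(2)] z(2) yA(1)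
      show ?thesis using True by (auto simp: prod_le_def n_def)
    next
      case False
      hence xA: "x \<in> A" "x \<noteq> z" using x by (auto simp: A'_def)
      show ?thesis
      proof (cases "y = n")
        case True
        from ac_cmp[OF A xA(1) z(1) xA(2)] z(2) xA(1)
        show ?thesis using True by (auto simp: prod_le_def n_def)
      next
        case False
        hence "y \<in> A" using y by (auto simp: A'_def)
        thus ?thesis using ac_basic(4)[OF A xA(1) _ xy] by simp
      qed
    qed
  qed
  have A'AC: "A' \<in> AC a b k" using sub cardA' anti by (simp add: antichains_def)
  have step: "antichain_step (grid a b) prod_le k A A'"
    unfolding antichain_step_def
  proof (intro conjI exI)
    show "A \<in> AC a b k" by (rule A)
    show "A' \<in> AC a b k" by (rule A'AC)
    show "A - A' = {z}" using z(1) nA by (auto simp: A'_def n_def)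
    show "A' - A = {n}" using nA by (auto simp: A'_def)
    show "prod_le z n" by (simp add: prod_le_def n_def)
    show "z \<noteq> n" by (simp add: n_def prod_eq_iff)
  qed
  have cxA': "cx A' t \<le> h t" if t: "1 \<le> t" for t
  proof -
    have e: "cx A' t + (if t \<le> fst z then 1 else 0) = cx A t + (if t \<le> fst n then 1 else 0)"
      using card_swap[OF fA z(1) nA, of "\<lambda>w. t \<le> fst w"] unfolding cx_def A'_def by simp
    show ?thesis
    proof (cases "t = fst z + 1")
      case True thus ?thesis using e z(3) by (simp add: n_def)
    next
      case False
      hence "cx A' t = cx A t" using e by (auto simp: n_def split: if_splits)
      thus ?thesis using hle[OF t] by simp
    qed
  qed
  have cyA': "cy A' t = cy A t" for t
    using card_swap[OF fA z(1) nA, of "\<lambda>w. t \<le> snd w"] unfolding cy_def A'_def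
    by (simp add: n_def)
  show ?thesis using step cxA' cyA' by blast
qed

lemma move_y:
  assumes A: "A \<in> AC a b k"
    and hanti: "\<And>s t. 1 \<le> s \<Longrightarrow> s \<le> t \<Longrightarrow> h t \<le> h s"
    and hlip: "\<And>t. h t \<le> h (t+1) + 1"
    and hpos: "\<And>t. 0 < h t \<Longrightarrow> t \<le> b"
    and hle: "\<And>t. 1 \<le> t \<Longrightarrow> cy A t \<le> h t" and h1: "h 1 \<le> k"
    and ex: "1 \<le> t0" "cy A t0 < h t0"
  shows "\<exists>A'. antichain_step (grid a b) prod_le k A A' \<and> (\<forall>t. 1 \<le> t \<longrightarrow> cy A' t \<le> h t) \<and> (\<forall>t. cx A' t = cx A t)"
proof -
  obtain s z0 where s: "cy A s < h s" "z0 \<in> A" "snd z0 + 1 = s"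
    using start_y[OF A hanti hle h1 ex] by blast
  obtain z where z: "z \<in> A" "\<forall>w\<in>A. snd w \<noteq> snd z + 1" "cy A (snd z + 1) < h (snd z + 1)"
    using run_y[OF A hlip s] by blast
  define n where "n = (fst z, snd z + 1)"
  define A' where "A' = insert n (A - {z})"
  have fA: "finite A" using ac_basic(1)[OF A] .
  have nA: "n \<notin> A" using z(2) by (auto simp: n_def)
  have za: "snd z + 1 \<le> b" using hpos[of "snd z + 1"] z(3) by simp
  have zg: "1 \<le> fst z" "fst z \<le> a" using ac_grid[OF A z(1)] by auto
  have ng: "n \<in> grid a b" using za zg by (simp add: n_def grid_def)
  have sub: "A' \<subseteq> grid a b" using ng ac_basic(3)[OF A] by (auto simp: A'_def)
  have k1: "1 \<le> k" using ac_basic(2)[OF A] z(1) fA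
    by (metis One_nat_def Suc_leI card_gt_0_iff empty_iff)
  have cardA': "card A' = k"
  proof -
    have "card (A - {z}) = k - 1" using ac_basic(2)[OF A] z(1) fA by simp
    moreover have "n \<notin> A - {z}" using nA by simp
    ultimately show ?thesis using fA k1 by (simp add: A'_def)
  qed
  have anti: "\<forall>x\<in>A'. \<forall>y\<in>A'. x \<noteq> y \<longrightarrow> \<not> prod_le x y"
  proof (intro ballI impI)
    fix x y assume x: "x \<in> A'" and y: "y \<in> A'" and xy: "x \<noteq> y"
    show "\<not> prod_le x y"
    proof (cases "x = n")
      case True
      hence yA: "y \<in> A" "y \<noteq> z" using y xy by (auto simp: A'_def)
      from ac_cmp[OF A yA(1) z(1) yA(2)] z(2) yA(1)
      show ?thesis using True by (auto simp: prod_le_def n_def)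
    next
      case False
      hence xA: "x \<in> A" "x \<noteq> z" using x by (auto simp: A'_def)
      show ?thesis
      proof (cases "y = n")
        case True
        from ac_cmp[OF A xA(1) z(1) xA(2)] z(2) xA(1)
        show ?thesis using True by (auto simp: prod_le_def n_def)
      next
        case False
        hence "y \<in> A" using y by (auto simp: A'_def)
        thus ?thesis using ac_basic(4)[OF A xA(1) _ xy] by simp
      qed
    qed
  qed
  have A'AC: "A' \<in> AC a b k" using sub cardA' anti by (simp add: antichains_def)
  have step: "antichain_step (grid a b) prod_le k A A'"
    unfolding antichain_step_def
  proof (intro conjI exI)
    show "A \<in> AC a b k" by (rule A)
    show "A' \<in> AC a b k" by (rule A'AC)
    show "A - A' = {z}" using z(1) nA by (auto simp: A'_def n_def)
    show "A' - A = {n}" using nA by (auto simp: A'_def)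
    show "prod_le z n" by (simp add: prod_le_def n_def)
    show "z \<noteq> n" by (simp add: n_def prod_eq_iff)
  qed
  have cyA': "cy A' t \<le> h t" if t: "1 \<le> t" for t
  proof -
    have e: "cy A' t + (if t \<le> snd z then 1 else 0) = cy A t + (if t \<le> snd n then 1 else 0)"
      using card_swap[OF fA z(1) nA, of "\<lambda>w. t \<le> snd w"] unfolding cy_def A'_def by simp
    show ?thesis
    proof (cases "t = snd z + 1")
      case True thus ?thesis using e z(3) by (simp add: n_def)
    next
      case False
      hence "cy A' t = cy A t" using e by (auto simp: n_def split: if_splits)
      thus ?thesis using hle[OF t] by simp
    qed
  qed
  have cxA': "cx A' t = cx A t" for t
    using card_swap[OF fA z(1) nA, of "\<lambda>w. t \<le> fst w"] unfolding cx_def A'_def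
    by (simp add: n_def)
  show ?thesis using step cyA' cxA' by blast
qed



lemma gx_mono: "D \<subseteq> D' \<Longrightarrow> gx k D t \<le> gx k D' t"
  unfolding gx_def by (rule card_mono) auto
lemma gy_mono: "D \<subseteq> D' \<Longrightarrow> gy k D t \<le> gy k D' t"
  unfolding gy_def by (rule card_mono) auto

lemma FD_props:
  assumes "D \<in> ferrers_durfee k a b"
  shows "finite D" "dc D" "(k+1,k+1) \<notin> D" "D \<subseteq> grid a b" "{1..k}\<times>{1..k} \<subseteq> D"
  using assms durfee_props[of D k] by (auto simp: ferrers_durfee_def ferrers_def dc_def)

lemma climb:
  assumes D: "D \<in> ferrers_durfee k a b"
  shows "A \<in> AC a b k \<Longrightarrow> fer k A \<subseteq> D \<Longrightarrow>
    \<exists>B\<in>AC a b k. antichain_le (grid a b) prod_le k A B \<and> fer k B = D"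
proof (induction "card (D - fer k A)" arbitrary: A rule: less_induct)
  case less
  have A: "A \<in> AC a b k" and sub: "fer k A \<subseteq> D" using less.prems by auto
  note Dp = FD_props[OF D]
  show ?case
  proof (cases "fer k A = D")
    case True
    thus ?thesis using A by (auto simp: antichain_le_def)
  next
    case False
    have hx: "cx A t \<le> gx k D t" if "1 \<le> t" for t
      using gx_fer[OF A that] gx_mono[OF sub, of k t] by simp
    have hy: "cy A t \<le> gy k D t" if "1 \<le> t" for t
      using gy_fer[OF A that] gy_mono[OF sub, of k t] by simp
    have "\<exists>t. 1 \<le> t \<and> (cx A t < gx k D t \<or> cy A t < gy k D t)"
    proof (rule ccontr)
      assume "\<not> ?thesis"
      hence "\<And>t. 1 \<le> t \<Longrightarrow> gx k D t \<le> gx k (fer k A) t" "\<And>t. 1 \<le> t \<Longrightarrow> gy k D t \<le> gy k (fer k A) t"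
        using gx_fer[OF A] gy_fer[OF A] by (auto simp: not_less)
      hence "D \<subseteq> fer k A" using dc_le[OF Dp(2) fer_dc[OF A] Dp(3)] by blast
      thus False using sub False by blast
    qed
    then obtain t0 where t0: "1 \<le> t0" "cx A t0 < gx k D t0 \<or> cy A t0 < gy k D t0" by blast
    have "\<exists>A'. antichain_step (grid a b) prod_le k A A' \<and> fer k A' \<subseteq> D"
    proof (cases "cx A t0 < gx k D t0")
      case True
      obtain A' where A': "antichain_step (grid a b) prod_le k A A'"
        "\<forall>t. 1 \<le> t \<longrightarrow> cx A' t \<le> gx k D t" "\<forall>t. cy A' t = cy A t"
        using move_x[OF A, of "gx k D" t0] gx_anti[OF Dp(2)] gx_lip[OF Dp(2)] gx_pos[OF Dp(4)]
          hx gx_le_k t0(1) True by blast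
      have A'AC: "A' \<in> AC a b k" using A'(1) by (simp add: antichain_step_def)
      have "fer k A' \<subseteq> D"
      proof (rule dc_le[OF fer_dc[OF A'AC] Dp(2) fer_sq(2)[OF A'AC]])
        fix t :: nat assume t: "1 \<le> t"
        show "gx k (fer k A') t \<le> gx k D t" using gx_fer[OF A'AC t] A'(2) t by simp
        show "gy k (fer k A') t \<le> gy k D t" using gy_fer[OF A'AC t] A'(3) hy[OF t] by simp
      qed
      thus ?thesis using A'(1) by blast
    next
      case False
      hence True: "cy A t0 < gy k D t0" using t0(2) by simp
      obtain A' where A': "antichain_step (grid a b) prod_le k A A'"
        "\<forall>t. 1 \<le> t \<longrightarrow> cy A' t \<le> gy k D t" "\<forall>t. cx A' t = cx A t"
        using move_y[OF A, of "gy k D" t0] gy_anti[OF Dp(2)] gy_lip[OF Dp(2)] gy_pos[OF Dp(4)]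
          hy gy_le_k t0(1) True by blast
      have A'AC: "A' \<in> AC a b k" using A'(1) by (simp add: antichain_step_def)
      have "fer k A' \<subseteq> D"
      proof (rule dc_le[OF fer_dc[OF A'AC] Dp(2) fer_sq(2)[OF A'AC]])
        fix t :: nat assume t: "1 \<le> t"
        show "gx k (fer k A') t \<le> gx k D t" using gx_fer[OF A'AC t] A'(3) hx[OF t] by simp
        show "gy k (fer k A') t \<le> gy k D t" using gy_fer[OF A'AC t] A'(2) t by simp
      qed
      thus ?thesis using A'(1) by blast
    qed
    then obtain A' where A': "antichain_step (grid a b) prod_le k A A'" "fer k A' \<subseteq> D" by blast
    have A'AC: "A' \<in> AC a b k" using A'(1) by (simp add: antichain_step_def)
    have le1: "fer k A \<subseteq> fer k A'"
      using step_mono[OF A'(1)] by (intro fer_mono_c) auto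
    have "A \<noteq> A'" using A'(1) by (auto simp: antichain_step_def)
    hence "fer k A \<noteq> fer k A'" using fer_inj[OF A A'AC] by blast
    hence "D - fer k A' \<subset> D - fer k A" using le1 A'(2) sub by blast
    hence "card (D - fer k A') < card (D - fer k A)" using Dp(1) by (intro psubset_card_mono) auto
    then obtain B where B: "B \<in> AC a b k" "antichain_le (grid a b) prod_le k A' B" "fer k B = D"
      using less.hyps[OF _ A'AC A'(2)] by blast
    have "antichain_le (grid a b) prod_le k A B"
      using B(2) A'(1) unfolding antichain_le_def by (rule converse_rtranclp_into_rtranclp[rotated])
    thus ?thesis using B by blast
  qed
qed

definition A0 :: "nat \<Rightarrow> (nat \<times> nat) set" where
  "A0 k = (\<lambda>i. (i, k+1-i)) ` {1..k}"

lemma A0_AC: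
  assumes "k \<le> min a b"
  shows "A0 k \<in> AC a b k"
proof -
  have inj: "inj_on (\<lambda>i. (i, k+1-i)) {1..k}" by (auto simp: inj_on_def)
  have "card (A0 k) = k" unfolding A0_def using card_image[OF inj] by simp
  moreover have "A0 k \<subseteq> grid a b" using assms by (auto simp: A0_def grid_def)
  moreover have "\<forall>x\<in>A0 k. \<forall>y\<in>A0 k. x \<noteq> y \<longrightarrow> \<not> prod_le x y"
    by (auto simp: A0_def prod_le_def)
  ultimately show ?thesis by (simp add: antichains_def)
qed

lemma A0_fer:
  assumes "k \<le> min a b"
  shows "fer k (A0 k) \<subseteq> {1..k}\<times>{1..k}"
proof
  have AC: "A0 k \<in> AC a b k" by (rule A0_AC[OF assms])
  have fin: "finite (A0 k)" by (simp add: A0_def)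
  have bx: "cx (A0 k) s \<le> k + 1 - s" for s
    unfolding cx_def
    by (rule card_inj_le_interval[where g=fst], use fin in simp,
        rule inj_on_subset[OF ac_inj(1)[OF AC]], auto simp: A0_def)
  have by': "cy (A0 k) s \<le> k + 1 - s" for s
    unfolding cy_def
    by (rule card_inj_le_interval[where g=snd], use fin in simp,
        rule inj_on_subset[OF ac_inj(2)[OF AC]], auto simp: A0_def)
  fix x assume x: "x \<in> fer k (A0 k)"
  obtain p q where xpq: "x = (p,q)" by (cases x)
  have m: "1 \<le> p \<and> 1 \<le> q \<and> ((q \<le> k \<and> q \<le> cx (A0 k) (p+1-q)) \<or> (p \<le> k \<and> p \<le> cy (A0 k) (q+1-p)))"
    using fer_memD x xpq by blast
  have "p \<le> k \<and> q \<le> k"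
  proof (cases "q \<le> k \<and> q \<le> cx (A0 k) (p+1-q)")
    case True thus ?thesis using bx[of "p+1-q"] m by linarith
  next
    case False thus ?thesis using by'[of "q+1-p"] m by linarith
  qed
  thus "x \<in> {1..k}\<times>{1..k}" using m xpq by simp
qed

theorem corollary3p2:
  fixes a b k :: nat
  assumes "k \<le> min a b"
  shows "\<exists>f. bij_betw f (antichains (grid a b) prod_le k) (ferrers_durfee k a b) \<and>
    (\<forall>A\<in>antichains (grid a b) prod_le k. \<forall>B\<in>antichains (grid a b) prod_le k.
        antichain_le (grid a b) prod_le k A B \<longleftrightarrow> f A \<subseteq> f B)"
proof (intro exI conjI)
  show "bij_betw (fer k) (AC a b k) (ferrers_durfee k a b)"
    unfolding bij_betw_def
  proof (intro conjI)
    show "inj_on (fer k) (AC a b k)"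
    proof (rule inj_onI)
      fix A B assume "A \<in> AC a b k" "B \<in> AC a b k" "fer k A = fer k B"
      thus "A = B" by (rule fer_inj)
    qed
    show "fer k ` AC a b k = ferrers_durfee k a b"
    proof
      show "fer k ` AC a b k \<subseteq> ferrers_durfee k a b" using fer_FD[OF _ assms] by blast
      show "ferrers_durfee k a b \<subseteq> fer k ` AC a b k"
      proof
        fix D assume D: "D \<in> ferrers_durfee k a b"
        have "fer k (A0 k) \<subseteq> D" using A0_fer[OF assms] FD_props(5)[OF D] by blast
        then obtain B where "B \<in> AC a b k" "fer k B = D"
          using climb[OF D A0_AC[OF assms]] by blast
        thus "D \<in> fer k ` AC a b k" by blast
      qed
    qed
  qed
  show "\<forall>A\<in>AC a b k. \<forall>B\<in>AC a b k. antichain_le (grid a b) prod_le k A B \<longleftrightarrow> fer k A \<subseteq> fer k B"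
  proof (intro ballI iffI)
    fix A B assume "A \<in> AC a b k" "B \<in> AC a b k" and l: "antichain_le (grid a b) prod_le k A B"
    show "fer k A \<subseteq> fer k B" by (rule le_mono[OF l])
  next
    fix A B assume A: "A \<in> AC a b k" and B: "B \<in> AC a b k" and s: "fer k A \<subseteq> fer k B"
    obtain B' where B': "B' \<in> AC a b k" "antichain_le (grid a b) prod_le k A B'" "fer k B' = fer k B"
      using climb[OF fer_FD[OF B assms] A s] by blast
    have "B' = B" by (rule fer_inj[OF B'(1) B B'(3)])
    thus "antichain_le (grid a b) prod_le k A B" using B'(2) by simp
  qed
qed


end
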